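(* Let $n>0$ and $d>0$ be integers and let $k,r$ be integers with $n=kd+r$. If $k\geq |r|+1$, then $d\in A_n$.
   Context: A walk is a finite sequence $z_0,z_1,\dots,z_l$ of Gaussian integers with $|z_{j+1}-z_j|=1$ for all $0\le j<l$. For natural numbers $n,d$, $n$ is called $d$-avoidable if there exists a walk $(z_j)$ and indices $r,s$ with $z_r-z_s=n$ such that $z_t-z_u\neq d$ for all indices $t,u$. $A_n$ denotes the set of all $d\in\mathbb{N}$ such that $n$ is not $d$-avoidable. *)

theory Defs
  imports Main
begin

text \<open>Gaussian integers are represented as pairs of integers (a, b) standing for a + b i.
  Since a, b are integers, |w| = 1 holds iff a^2 + b^2 = 1.\<close>

type_synonym gint = "int \<times> int"

definition gsub :: "gint \<Rightarrow> gint \<Rightarrow> gint" where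
  "gsub z w = (fst z - fst w, snd z - snd w)"

definition gnorm_sq :: "gint \<Rightarrow> int" where
  "gnorm_sq z = (fst z)\<^sup>2 + (snd z)\<^sup>2"

definition is_walk :: "(nat \<Rightarrow> gint) \<Rightarrow> nat \<Rightarrow> bool" where
  "is_walk z l \<longleftrightarrow> (\<forall>j<l. gnorm_sq (gsub (z (Suc j)) (z j)) = 1)"

definition avoidable :: "nat \<Rightarrow> nat \<Rightarrow> bool" where
  "avoidable n d \<longleftrightarrow>
     (\<exists>z l. is_walk z l \<and>
        (\<exists>r\<le>l. \<exists>s\<le>l. gsub (z r) (z s) = (int n, 0)) \<and>
        (\<forall>t\<le>l. \<forall>u\<le>l. gsub (z t) (z u) \<noteq> (int d, 0)))"

definition A :: "nat \<Rightarrow> nat set" where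
  "A n = {d. d > 0 \<and> \<not> avoidable n d}"

end

theory Submission
  imports Defs
begin

definition ustep :: "gint \<Rightarrow> gint \<Rightarrow> bool" where
  "ustep a b \<longleftrightarrow> a = (fst b + 1, snd b) \<or> a = (fst b - 1, snd b) \<or>
                 a = (fst b, snd b + 1) \<or> a = (fst b, snd b - 1)"

lemma div_step:
  fixes a N :: int assumes N: "N > 0"
  shows "(a + 1) div N = a div N + (if N dvd (a + 1) then 1 else 0)"
proof -
  define q where "q = a div N"
  define m where "m = a mod N"
  have h: "a = (m + 1) - 1 + q * N" unfolding q_def m_def by simp
  have m: "0 \<le> m" "m < N" unfolding m_def using N by auto
  show ?thesis
  proof (cases "m + 1 = N")
    case True
    then have "a + 1 = 0 + (q + 1) * N" using h by (simp add: algebra_simps)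
    then show ?thesis using N unfolding q_def[symmetric] by simp
  next
    case False
    then have m1: "m + 1 < N" using m by simp
    have e: "a + 1 = (m + 1) + q * N" using h by simp
    have "(a + 1) div N = q" unfolding e using N m m1 by simp
    moreover have "(a + 1) mod N = m + 1" unfolding e using N m m1 by simp
    then have "\<not> N dvd (a+1)" using m by (simp add: dvd_eq_mod_eq_0)
    ultimately show ?thesis unfolding q_def by simp
  qed
qed

lemma ex_max_idx:
  fixes f :: "nat \<Rightarrow> int"
  shows "\<exists>t\<le>l. \<forall>i\<le>l. f i \<le> f t"
proof (induction l)
  case 0 then show ?case by auto
next
  case (Suc l)
  then obtain t where t: "t \<le> l" "\<forall>i\<le>l. f i \<le> f t" by auto
  show ?case
  proof (cases "f (Suc l) \<le> f t")
    case True then show ?thesis using t by (auto simp: le_Suc_eq)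
  next
    case False then show ?thesis using t by (auto simp: le_Suc_eq intro!: exI[of _ "Suc l"])
  qed
qed

lemma ex_min_idx:
  fixes f :: "nat \<Rightarrow> int"
  shows "\<exists>t\<le>l. \<forall>i\<le>l. f t \<le> f i"
  using ex_max_idx[where f="\<lambda>i. - f i" and l=l] by auto

lemma cyl_core:
  fixes q :: "nat \<Rightarrow> int \<times> int" and l :: nat and N \<sigma> D :: int
  assumes steps: "\<forall>i<l. ustep (q (Suc i)) (q i)"
    and N: "N > 0" and \<sigma>: "\<sigma> \<noteq> 0"
    and close: "q l = (fst (q 0) + \<sigma> * N, snd (q 0))"
    and disj: "\<forall>i\<le>l. \<forall>j\<le>l. snd (q i) = snd (q j) \<longrightarrow> \<not> N dvd (fst (q i) - fst (q j) - D)"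
  shows False
proof -
  define memA where "memA = (\<lambda>x y. \<exists>i\<le>l. snd (q i) = y \<and> N dvd (fst (q i) - x))"
  define dl where "dl = (\<lambda>x y i.
      if snd (q i) = y \<and> q (Suc i) = (fst (q i), y + 1) then (fst (q i) - x - 1) div N
      else if snd (q i) = y + 1 \<and> q (Suc i) = (fst (q i), y) then - ((fst (q i) - x - 1) div N)
      else 0)"
  define V where "V = (\<lambda>x y. \<Sum>i<l. dl x y i)"
  define H where "H = (\<lambda>x y. \<sigma> * (if snd (q 0) > y then 1 else 0) - V x y)"
  have stepcases: "\<And>i P. i < l \<Longrightarrow>
      (\<And>X Y. q i = (X, Y) \<Longrightarrow> q (Suc i) = (X + 1, Y) \<Longrightarrow> P) \<Longrightarrow>
      (\<And>X Y. q i = (X, Y) \<Longrightarrow> q (Suc i) = (X - 1, Y) \<Longrightarrow> P) \<Longrightarrow>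
      (\<And>X Y. q i = (X, Y) \<Longrightarrow> q (Suc i) = (X, Y + 1) \<Longrightarrow> P) \<Longrightarrow>
      (\<And>X Y. q i = (X, Y) \<Longrightarrow> q (Suc i) = (X, Y - 1) \<Longrightarrow> P) \<Longrightarrow> P"
    using steps unfolding ustep_def by (metis prod.collapse)
  have P1: "H x y = H x (y + 1)" if nA: "\<not> memA x (y + 1)" for x y
  proof -
    define G where "G = (\<lambda>i. if snd (q i) = y + 1 then (fst (q i) - x - 1) div N else 0)"
    have st: "G (Suc i) - G i = dl x y i - dl x (y + 1) i" if i: "i < l" for i
    proof (rule stepcases[OF i])
      fix X Y assume a: "q i = (X, Y)" "q (Suc i) = (X + 1, Y)"
      have "Y = y + 1 \<Longrightarrow> \<not> N dvd (X - x)" using nA i a unfolding memA_def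
        by (metis fst_conv less_imp_le_nat snd_conv)
      then have "Y = y + 1 \<Longrightarrow> (X + 1 - x - 1) div N = (X - x - 1) div N"
        using div_step[OF N, of "X - x - 1"] by simp
      then show ?thesis using a unfolding G_def dl_def by auto
    next
      fix X Y assume a: "q i = (X, Y)" "q (Suc i) = (X - 1, Y)"
      have "Y = y + 1 \<Longrightarrow> \<not> N dvd (X - 1 - x)" using nA i a unfolding memA_def
        by (metis Suc_leI fst_conv snd_conv)
      moreover have "X - 1 - x = X - x - 1" "X - 1 - x - 1 + 1 = X - x - 1" by simp_all
      ultimately have "Y = y + 1 \<Longrightarrow> (X - 1 - x - 1) div N = (X - x - 1) div N"
        using div_step[OF N, of "X - 1 - x - 1"] by simp
      then show ?thesis using a unfolding G_def dl_def by auto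
    next
      fix X Y assume a: "q i = (X, Y)" "q (Suc i) = (X, Y + 1)"
      then show ?thesis unfolding G_def dl_def by auto
    next
      fix X Y assume a: "q i = (X, Y)" "q (Suc i) = (X, Y - 1)"
      then show ?thesis unfolding G_def dl_def by auto
    qed
    have "(\<Sum>i<l. G (Suc i) - G i) = G l - G 0" by (rule sum_lessThan_telescope)
    also have "\<dots> = (if snd (q 0) = y + 1 then \<sigma> else 0)"
    proof -
      have "(fst (q 0) + \<sigma> * N - x - 1) div N = (fst (q 0) - x - 1 + \<sigma> * N) div N"
        by (simp add: algebra_simps)
      also have "\<dots> = (fst (q 0) - x - 1) div N + \<sigma>" using N by simp
      finally show ?thesis unfolding G_def using close by simp
    qed
    finally have "V x y - V x (y + 1) = (if snd (q 0) = y + 1 then \<sigma> else 0)"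
      unfolding V_def using st by (simp add: sum_subtractf[symmetric])
    then show ?thesis unfolding H_def by auto
  qed
  have P2: "H (x + 1) y = H x y" if nA: "\<not> memA (x + 1) y" for x y
  proof -
    have "dl (x + 1) y i = dl x y i" if i: "i < l" for i
    proof (rule stepcases[OF i])
      fix X Y assume a: "q i = (X, Y)" "q (Suc i) = (X, Y + 1)"
      have "Y = y \<Longrightarrow> \<not> N dvd (X - (x + 1))" using nA i a unfolding memA_def
        by (metis fst_conv less_imp_le_nat snd_conv)
      moreover have "X - (x + 1) = X - x - 1" "X - (x + 1) - 1 + 1 = X - x - 1" by simp_all
      ultimately have "Y = y \<Longrightarrow> (X - (x + 1) - 1) div N = (X - x - 1) div N"
        using div_step[OF N, of "X - (x + 1) - 1"] by simp
      then show ?thesis using a unfolding dl_def by auto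
    next
      fix X Y assume a: "q i = (X, Y)" "q (Suc i) = (X, Y - 1)"
      have "Y = y + 1 \<Longrightarrow> \<not> N dvd (X - (x + 1))" using nA i a unfolding memA_def
        by (metis Suc_leI fst_conv snd_conv add_diff_cancel_right')
      moreover have "X - (x + 1) = X - x - 1" "X - (x + 1) - 1 + 1 = X - x - 1" by simp_all
      ultimately have "Y = y + 1 \<Longrightarrow> (X - (x + 1) - 1) div N = (X - x - 1) div N"
        using div_step[OF N, of "X - (x + 1) - 1"] by simp
      then show ?thesis using a unfolding dl_def by auto
    next
      fix X Y assume a: "q i = (X, Y)" "q (Suc i) = (X + 1, Y)"
      then show ?thesis unfolding dl_def by auto
    next
      fix X Y assume a: "q i = (X, Y)" "q (Suc i) = (X - 1, Y)"
      then show ?thesis unfolding dl_def by auto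
    qed
    then show ?thesis unfolding H_def V_def by simp
  qed
  have notA: "\<not> memA (fst (q t) + D) (snd (q t))" if t: "t \<le> l" for t
  proof
    assume "memA (fst (q t) + D) (snd (q t))"
    then obtain i where "i \<le> l" "snd (q i) = snd (q t)" "N dvd (fst (q i) - (fst (q t) + D))"
      unfolding memA_def by auto
    then show False using disj t by (auto simp: algebra_simps)
  qed
  have const: "H (fst (q t) + D) (snd (q t)) = H (fst (q 0) + D) (snd (q 0))" if "t \<le> l" for t
    using that
  proof (induction t)
    case 0 then show ?case by simp
  next
    case (Suc t)
    then have t: "t < l" by simp
    have IH: "H (fst (q t) + D) (snd (q t)) = H (fst (q 0) + D) (snd (q 0))" using Suc by simp
    have n1: "\<not> memA (fst (q t) + D) (snd (q t))" using notA t by simp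
    have n2: "\<not> memA (fst (q (Suc t)) + D) (snd (q (Suc t)))" using notA Suc.prems by simp
    show ?case
    proof (rule stepcases[OF t])
      fix X Y assume a: "q t = (X, Y)" "q (Suc t) = (X + 1, Y)"
      have "H (X + D + 1) Y = H (X + D) Y" by (rule P2) (use n2 a in \<open>simp add: algebra_simps\<close>)
      then show ?thesis using IH a by (simp add: algebra_simps)
    next
      fix X Y assume a: "q t = (X, Y)" "q (Suc t) = (X - 1, Y)"
      have "H (X - 1 + D + 1) Y = H (X - 1 + D) Y" by (rule P2) (use n1 a in \<open>simp add: algebra_simps\<close>)
      then show ?thesis using IH a by (simp add: algebra_simps)
    next
      fix X Y assume a: "q t = (X, Y)" "q (Suc t) = (X, Y + 1)"
      have "H (X + D) Y = H (X + D) (Y + 1)" by (rule P1) (use n2 a in simp)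
      then show ?thesis using IH a by simp
    next
      fix X Y assume a: "q t = (X, Y)" "q (Suc t) = (X, Y - 1)"
      have "H (X + D) (Y - 1) = H (X + D) (Y - 1 + 1)" by (rule P1) (use n1 a in simp)
      then show ?thesis using IH a by simp
    qed
  qed
  obtain tt where tt: "tt \<le> l" "\<forall>i\<le>l. snd (q i) \<le> snd (q tt)"
    using ex_max_idx[where f="\<lambda>i. snd (q i)" and l=l] by auto
  obtain tb where tb: "tb \<le> l" "\<forall>i\<le>l. snd (q tb) \<le> snd (q i)"
    using ex_min_idx[where f="\<lambda>i. snd (q i)" and l=l] by auto
  have "H x (snd (q tt)) = 0" for x
  proof -
    have "dl x (snd (q tt)) i = 0" if "i < l" for i
    proof -
      have "snd (q (Suc i)) \<le> snd (q tt)" "snd (q i) \<le> snd (q tt)" using tt that by auto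
      then show ?thesis unfolding dl_def by (auto split: if_splits)
    qed
    moreover have "\<not> snd (q 0) > snd (q tt)" using tt by auto
    ultimately show ?thesis unfolding H_def V_def by simp
  qed
  then have top: "H (fst (q tt) + D) (snd (q tt)) = 0" by simp
  have "H x (snd (q tb) - 1) = \<sigma>" for x
  proof -
    have "dl x (snd (q tb) - 1) i = 0" if "i < l" for i
    proof -
      have "snd (q tb) \<le> snd (q (Suc i))" "snd (q tb) \<le> snd (q i)" using tb that by auto
      then show ?thesis unfolding dl_def by (auto split: if_splits)
    qed
    moreover have "snd (q 0) > snd (q tb) - 1" using tb by auto
    ultimately show ?thesis unfolding H_def V_def by simp
  qed
  moreover have "H (fst (q tb) + D) (snd (q tb) - 1) = H (fst (q tb) + D) (snd (q tb) - 1 + 1)"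
    by (rule P1) (use notA[OF tb(1)] in simp)
  ultimately have bot: "H (fst (q tb) + D) (snd (q tb)) = \<sigma>" by simp
  show False using const[OF tt(1)] const[OF tb(1)] top bot \<sigma> by simp
qed


lemma abs_dvd_one_contra:
  fixes c t :: int assumes "\<bar>c\<bar> \<ge> 2" and "1 + \<bar>c\<bar> * t = c \<or> 1 + \<bar>c\<bar> * t = - c"
  shows False
proof -
  have cs: "c = sgn c * \<bar>c\<bar>" by (simp add: sgn_mult_abs)
  from assms(2) have "1 = \<bar>c\<bar> * (sgn c - t) \<or> 1 = \<bar>c\<bar> * (- sgn c - t)"
    by (metis (no_types, opaque_lifting) cs add_diff_cancel_left' diff_add_cancel minus_mult_left mult.commute right_diff_distrib')
  then have "\<bar>c\<bar> dvd 1" by (metis dvd_triv_left)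
  then have "\<bar>c\<bar> \<le> 1" by (rule zdvd_imp_le) simp
  then show False using assms(1) by simp
qed

lemma levy:
  fixes p :: "nat \<Rightarrow> int \<times> int" and l sA uA :: nat and D cA :: int
  assumes steps: "\<forall>i<l. ustep (p (Suc i)) (p i)" and D: "D > 0"
    and cA: "cA \<noteq> 0" and sA: "sA \<le> l" and uA: "uA \<le> l"
    and puA: "p uA = (fst (p sA) + cA * D, snd (p sA))"
  shows "\<exists>s\<le>l. \<exists>u\<le>l. p u = (fst (p s) + D, snd (p s))"
proof -
  define P where "P = (\<lambda>m. \<exists>s u c. s \<le> u \<and> u \<le> l \<and> u - s = m \<and> c \<noteq> 0 \<and>
                         p u = (fst (p s) + c * D, snd (p s)))"
  have "\<exists>m. P m"
  proof (cases "sA \<le> uA")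
    case True then show ?thesis unfolding P_def using uA cA puA by blast
  next
    case False
    have "p sA = (fst (p uA) + (- cA) * D, snd (p uA))" using puA by (simp add: prod_eq_iff)
    then show ?thesis unfolding P_def using sA cA False
      by (metis neg_equal_0_iff_equal nle_le)
  qed
  define m where "m = (LEAST m. P m)"
  have Pm: "P m" unfolding m_def using \<open>\<exists>m. P m\<close> by (metis LeastI_ex)
  have least: "\<And>m'. P m' \<Longrightarrow> m \<le> m'" unfolding m_def by (rule Least_le)
  from Pm obtain s u c where su: "s \<le> u" "u \<le> l" "u - s = m" "c \<noteq> 0"
    and psu: "p u = (fst (p s) + c * D, snd (p s))" unfolding P_def by blast
  have sm: "s + m = u" using su by simp
  show ?thesis
  proof (cases "\<bar>c\<bar> = 1")
    case True
    then have "c = 1 \<or> c = -1" by auto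
    then show ?thesis
    proof
      assume "c = 1" then show ?thesis using psu su by (metis mult_1 order_trans)
    next
      assume "c = -1"
      then have "p s = (fst (p u) + D, snd (p u))" using psu by (simp add: prod_eq_iff)
      then show ?thesis using su by (metis order_trans)
    qed
  next
    case False
    then have c2: "\<bar>c\<bar> \<ge> 2" using su(4) by linarith
    define q where "q = (\<lambda>t. p (s + t))"
    define N where "N = \<bar>c\<bar> * D"
    have N: "N > 0" unfolding N_def using c2 D by simp
    have "False"
    proof (rule cyl_core[where q=q and l=m and N=N and \<sigma>="sgn c" and D=D])
      show "\<forall>i<m. ustep (q (Suc i)) (q i)" unfolding q_def using steps su by auto
      show "N > 0" by (rule N)
      show "sgn c \<noteq> 0" using su(4) by (simp add: sgn_0_0)
      show "q m = (fst (q 0) + sgn c * N, snd (q 0))"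
        unfolding q_def N_def using psu sm by (simp add: mult.assoc[symmetric] sgn_mult_abs)
      show "\<forall>i\<le>m. \<forall>j\<le>m. snd (q i) = snd (q j) \<longrightarrow> \<not> N dvd (fst (q i) - fst (q j) - D)"
      proof (intro allI impI notI)
        fix i j assume i: "i \<le> m" and j: "j \<le> m" and y: "snd (q i) = snd (q j)"
          and dv: "N dvd (fst (q i) - fst (q j) - D)"
        then obtain t where t: "fst (q i) - fst (q j) - D = N * t" by (auto elim: dvdE)
        define c' where "c' = 1 + \<bar>c\<bar> * t"
        have xi: "fst (q i) = fst (q j) + c' * D" using t unfolding c'_def N_def
          by (simp add: algebra_simps)
        have c'0: "c' \<noteq> 0"
        proof
          assume "c' = 0"
          then have "\<bar>c\<bar> * (- t) = 1" unfolding c'_def by simp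
          then have "\<bar>c\<bar> dvd 1" by (metis dvd_triv_left)
          then have "\<bar>c\<bar> \<le> 1" by (rule zdvd_imp_le) simp
          then show False using c2 by simp
        qed
        show False
        proof (cases "j \<le> i")
          case True
          have "P (i - j)" unfolding P_def
            apply (rule exI[of _ "s + j"], rule exI[of _ "s + i"], rule exI[of _ c'])
            using True i su c'0 xi y unfolding q_def by (auto simp: prod_eq_iff)
          then have "m \<le> i - j" by (rule least)
          then have ij: "i = m" "j = 0" using i True by auto
          have "fst (p u) = fst (p s) + c' * D" using xi ij sm unfolding q_def by simp
          then have "c' * D = c * D" using psu by auto
          then have "c' = c" using D by simp
          then show False using abs_dvd_one_contra[OF c2] unfolding c'_def by blast
        next
          case False
          have "P (j - i)" unfolding P_def
            apply (rule exI[of _ "s + i"], rule exI[of _ "s + j"], rule exI[of _ "- c'"])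
            using False j su c'0 xi y unfolding q_def by (auto simp: prod_eq_iff)
          then have "m \<le> j - i" by (rule least)
          then have ij: "j = m" "i = 0" using j False by auto
          have "fst (p s) = fst (p u) + c' * D" using xi ij sm unfolding q_def by simp
          then have "(- c') * D = c * D" using psu by auto
          then have "c' = - c" using D by (metis minus_mult_left mult_cancel_right order_less_irrefl minus_minus)
          then show False using abs_dvd_one_contra[OF c2] unfolding c'_def by blast
        qed
      qed
    qed
    then show ?thesis by simp
  qed
qed


lemma ex_ab: "P 0 0 \<or> P 1 0 \<or> P 0 1 \<or> P 1 1 \<Longrightarrow> \<exists>a b. P a b" by blast

lemma bound_k:
  fixes k z :: int and m :: int
  assumes "k > 0" "\<bar>k * z\<bar> < m * k" shows "\<bar>z\<bar> < m"
proof -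
  have "\<bar>k * z\<bar> = k * \<bar>z\<bar>" using assms(1) by (simp add: abs_mult)
  then have "k * \<bar>z\<bar> < k * m" using assms(2) by (simp add: mult.commute)
  then show ?thesis using assms(1) by simp
qed

lemma conv:
  fixes k r d j i Dx Dy eax eay ebx eby :: int
  assumes k: "k > 0" and r: "\<bar>r\<bar> < k" and j: "0 \<le> j" "j < k" and i: "0 \<le> i" "i < k"
    and ea: "(eax = 1 \<and> eay = 0) \<or> (eax = -1 \<and> eay = 0) \<or> (eax = 0 \<and> eay = 1) \<or> (eax = 0 \<and> eay = -1)"
    and eb: "(ebx = 1 \<and> eby = 0) \<or> (ebx = -1 \<and> eby = 0) \<or> (ebx = 0 \<and> eby = 1) \<or> (ebx = 0 \<and> eby = -1)"
    and hx: "k * Dx + j * eax - i * ebx = k * d + r"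
    and hy: "k * Dy + j * eay - i * eby = 0"
  shows "\<exists>\<alpha> \<beta>::int. (\<alpha> = 0 \<or> (\<alpha> = 1 \<and> j > 0)) \<and> (\<beta> = 0 \<or> (\<beta> = 1 \<and> i > 0)) \<and>
           Dx + \<alpha> * eax - \<beta> * ebx = d \<and> Dy + \<alpha> * eay - \<beta> * eby = 0"
proof -
  have ja: "\<bar>j * eax\<bar> \<le> j" "\<bar>j * eay\<bar> \<le> j" using ea j by auto
  have ib: "\<bar>i * ebx\<bar> \<le> i" "\<bar>i * eby\<bar> \<le> i" using eb i by auto
  have "\<bar>k * Dy\<bar> < 2 * k" using hy ja ib j i by linarith
  then have "\<bar>Dy\<bar> < 2" by (rule bound_k[OF k])
  then have dy: "Dy = -1 \<or> Dy = 0 \<or> Dy = 1" by linarith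
  have "k * (Dx - d) = r - j * eax + i * ebx" using hx by (simp add: algebra_simps)
  then have "\<bar>k * (Dx - d)\<bar> < 3 * k" using r ja ib j i by linarith
  then have "\<bar>Dx - d\<bar> < 3" by (rule bound_k[OF k])
  then obtain z where z: "Dx = d + z" "z = -2 \<or> z = -1 \<or> z = 0 \<or> z = 1 \<or> z = 2"
    by (intro that[of "Dx - d"]) (simp, arith)
  have hz: "k * z = r - j * eax + i * ebx" using hx z(1) by (simp add: algebra_simps)
  have "\<exists>\<alpha> \<beta>::int. (\<alpha> = 0 \<or> (\<alpha> = 1 \<and> j > 0)) \<and> (\<beta> = 0 \<or> (\<beta> = 1 \<and> i > 0)) \<and>
           z + \<alpha> * eax - \<beta> * ebx = 0 \<and> Dy + \<alpha> * eay - \<beta> * eby = 0"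
    apply (rule ex_ab)
    using dy z(2) ea eb hz hy k r j i
    apply (elim disjE conjE)
    apply (simp_all add: algebra_simps)
    apply presburger+
    done
  then show ?thesis using z(1) by (auto simp: algebra_simps)
qed


definition unitv :: "int \<Rightarrow> int \<Rightarrow> bool" where
  "unitv ex ey \<longleftrightarrow> (ex = 1 \<and> ey = 0) \<or> (ex = -1 \<and> ey = 0) \<or> (ex = 0 \<and> ey = 1) \<or> (ex = 0 \<and> ey = -1)"

lemma unit_sq:
  fixes u v :: int assumes "u\<^sup>2 + v\<^sup>2 = 1" shows "unitv u v"
proof -
  have "u\<^sup>2 \<le> 1" "v\<^sup>2 \<le> 1" using assms zero_le_power2[of u] zero_le_power2[of v] by linarith+
  then have "\<bar>u\<bar> \<le> 1" "\<bar>v\<bar> \<le> 1"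
    by (metis abs_le_square_iff abs_one one_power2)+
  then have "u = -1 \<or> u = 0 \<or> u = 1" "v = -1 \<or> v = 0 \<or> v = 1" by auto
  then show ?thesis using assms unfolding unitv_def by auto
qed

lemma walk_unit:
  assumes "gnorm_sq (gsub a b) = 1"
  shows "\<exists>ex ey. unitv ex ey \<and> a = (fst b + ex, snd b + ey)"
proof -
  have "unitv (fst a - fst b) (snd a - snd b)"
    using assms unit_sq unfolding gnorm_sq_def gsub_def by simp
  then show ?thesis by (intro exI[of _ "fst a - fst b"] exI[of _ "snd a - snd b"]) simp
qed

lemma unit_ustep: "unitv ex ey \<Longrightarrow> ustep (fst b + ex, snd b + ey) b"
  unfolding unitv_def ustep_def by auto

lemma dm_nat: fixes a j K :: nat assumes "j < K" shows "(a * K + j) div K = a" "(a * K + j) mod K = j"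
  using assms by simp_all

theorem mainTheorem2:
  fixes n d :: nat and k r :: int
  assumes "n > 0" and "d > 0"
    and "int n = k * int d + r"
    and "k \<ge> \<bar>r\<bar> + 1"
  shows "d \<in> A n"
proof -
  have "\<not> avoidable n d"
  proof
    assume "avoidable n d"
    then obtain z l r0 s0 where walk: "is_walk z l" and r0: "r0 \<le> l" and s0: "s0 \<le> l"
      and ch: "gsub (z r0) (z s0) = (int n, 0)"
      and av: "\<forall>t\<le>l. \<forall>u\<le>l. gsub (z t) (z u) \<noteq> (int d, 0)"
      unfolding avoidable_def by blast
    define K where "K = nat k"
    have k1: "k \<ge> 1" using assms(4) by simp
    have Kk: "int K = k" unfolding K_def using k1 by simp
    have K0: "K > 0" using k1 Kk by linarith
    have zs: "\<exists>ex ey. unitv ex ey \<and> z (Suc a) = (fst (z a) + ex, snd (z a) + ey)" if "a < l" for a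
      using walk that walk_unit unfolding is_walk_def by blast
    define w where "w = (\<lambda>t. (k * fst (z (t div K)) + int (t mod K) * (fst (z (Suc (t div K))) - fst (z (t div K))),
                              k * snd (z (t div K)) + int (t mod K) * (snd (z (Suc (t div K))) - snd (z (t div K)))))"
    have wsteps: "\<forall>t<K * l. ustep (w (Suc t)) (w t)"
    proof (intro allI impI)
      fix t assume t: "t < K * l"
      define a where "a = t div K"
      define j where "j = t mod K"
      have tj: "t = a * K + j" unfolding a_def j_def by simp
      have jK: "j < K" unfolding j_def using K0 by simp
      have tdm: "t div K = a" "t mod K = j" unfolding a_def j_def by simp_all
      have al: "a < l" using t tj by (metis add_lessD1 mult.commute mult_less_cancel1)
      obtain ex ey where u: "unitv ex ey" and ze: "z (Suc a) = (fst (z a) + ex, snd (z a) + ey)"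
        using zs[OF al] by blast
      have wt: "w t = (k * fst (z a) + int j * ex, k * snd (z a) + int j * ey)"
        unfolding w_def a_def j_def using ze a_def by simp
      have "w (Suc t) = (fst (w t) + ex, snd (w t) + ey)"
      proof (cases "Suc j < K")
        case True
        have "Suc t = a * K + Suc j" using tj by simp
        then have "Suc t div K = a" "Suc t mod K = Suc j" using dm_nat[OF True] by simp_all
        then show ?thesis unfolding w_def using ze wt tdm by (simp add: algebra_simps)
      next
        case False
        then have "Suc j = K" using jK by simp
        then have "Suc t = Suc a * K + 0" using tj by simp
        then have d1: "Suc t div K = Suc a" "Suc t mod K = 0" using K0 by (metis dm_nat)+
        have kj: "k = 1 + int j" using \<open>Suc j = K\<close> Kk by linarith
        show ?thesis unfolding w_def using d1 ze wt tdm by (simp add: algebra_simps kj)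
      qed
      then show "ustep (w (Suc t)) (w t)" using unit_ustep[OF u] by simp
    qed
    have wv: "w (K * a) = (k * fst (z a), k * snd (z a))" for a
      unfolding w_def using K0 by simp
    have "\<exists>s\<le>K * l. \<exists>u\<le>K * l. w u = (fst (w s) + int n, snd (w s))"
    proof (rule levy[OF wsteps, where cA = k and sA = "K * s0" and uA = "K * r0"])
      show "int n > 0" using assms(1) by simp
      show "k \<noteq> 0" using k1 by simp
      show "K * s0 \<le> K * l" "K * r0 \<le> K * l" using r0 s0 by simp_all
      have "fst (z r0) = fst (z s0) + int n" "snd (z r0) = snd (z s0)" using ch unfolding gsub_def by auto
      then show "w (K * r0) = (fst (w (K * s0)) + k * int n, snd (w (K * s0)))"
        unfolding wv by (simp add: algebra_simps)
    qed
    then obtain s1 u1 where s1: "s1 \<le> K * l" and u1: "u1 \<le> K * l"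
      and wch: "w u1 = (fst (w s1) + int n, snd (w s1))" by blast
    have decomp: "\<exists>a j ex ey. a \<le> l \<and> 0 \<le> j \<and> j < k \<and> unitv ex ey \<and>
        w t = (k * fst (z a) + j * ex, k * snd (z a) + j * ey) \<and>
        (j > 0 \<longrightarrow> a < l \<and> z (Suc a) = (fst (z a) + ex, snd (z a) + ey))" if t: "t \<le> K * l" for t
    proof -
      define a where "a = t div K"
      define j where "j = t mod K"
      have tj: "t = a * K + j" unfolding a_def j_def by simp
      have jK: "j < K" unfolding j_def using K0 by simp
      have al: "a \<le> l" using t tj by (metis le_add1 mult.commute mult_le_cancel1 order_trans K0 not_gr0 le_eq_less_or_eq)
      show ?thesis
      proof (cases "j = 0")
        case True
        then have "w t = (k * fst (z a) + 0 * 1, k * snd (z a) + 0 * 0)"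
          unfolding w_def a_def j_def by simp
        then show ?thesis using al unfolding unitv_def by (intro exI[of _ a] exI[of _ 0] exI[of _ 1] exI[of _ 0]) (use k1 in auto)
      next
        case False
        have "a < l"
        proof (rule ccontr)
          assume "\<not> a < l" then have "a = l" using al by simp
          then show False using t tj False by (simp add: mult.commute)
        qed
        obtain ex ey where u: "unitv ex ey" and ze: "z (Suc a) = (fst (z a) + ex, snd (z a) + ey)"
          using zs[OF \<open>a < l\<close>] by blast
        have wt: "w t = (k * fst (z a) + int j * ex, k * snd (z a) + int j * ey)"
          unfolding w_def a_def j_def using ze a_def by simp
        show ?thesis
          by (intro exI[of _ a] exI[of _ "int j"] exI[of _ ex] exI[of _ ey])
             (use al \<open>a < l\<close> u ze wt jK Kk in auto)
      qed
    qed
    obtain a1 j1 eax eay where A1: "a1 \<le> l" "0 \<le> j1" "j1 < k" "unitv eax eay"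
      "w u1 = (k * fst (z a1) + j1 * eax, k * snd (z a1) + j1 * eay)"
      "j1 > 0 \<longrightarrow> a1 < l \<and> z (Suc a1) = (fst (z a1) + eax, snd (z a1) + eay)"
      using decomp[OF u1] by blast
    obtain a2 j2 ebx eby where A2: "a2 \<le> l" "0 \<le> j2" "j2 < k" "unitv ebx eby"
      "w s1 = (k * fst (z a2) + j2 * ebx, k * snd (z a2) + j2 * eby)"
      "j2 > 0 \<longrightarrow> a2 < l \<and> z (Suc a2) = (fst (z a2) + ebx, snd (z a2) + eby)"
      using decomp[OF s1] by blast
    have hx: "k * (fst (z a1) - fst (z a2)) + j1 * eax - j2 * ebx = k * int d + r"
      using wch A1(5) A2(5) assms(3) by (simp add: algebra_simps)
    have hy: "k * (snd (z a1) - snd (z a2)) + j1 * eay - j2 * eby = 0"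
      using wch A1(5) A2(5) by (simp add: algebra_simps)
    obtain \<alpha> \<beta> where ab: "\<alpha> = 0 \<or> (\<alpha> = 1 \<and> j1 > 0)" "\<beta> = 0 \<or> (\<beta> = 1 \<and> j2 > 0)"
      "(fst (z a1) - fst (z a2)) + \<alpha> * eax - \<beta> * ebx = int d"
      "(snd (z a1) - snd (z a2)) + \<alpha> * eay - \<beta> * eby = 0"
      using conv[OF _ _ A1(2,3) A2(2,3) A1(4)[unfolded unitv_def] A2(4)[unfolded unitv_def] hx hy] k1 assms(4)
      by force
    define t1 where "t1 = (if \<alpha> = 1 then Suc a1 else a1)"
    define t2 where "t2 = (if \<beta> = 1 then Suc a2 else a2)"
    have t1: "t1 \<le> l" "z t1 = (fst (z a1) + \<alpha> * eax, snd (z a1) + \<alpha> * eay)"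
      using ab(1) A1 unfolding t1_def by auto
    have t2: "t2 \<le> l" "z t2 = (fst (z a2) + \<beta> * ebx, snd (z a2) + \<beta> * eby)"
      using ab(2) A2 unfolding t2_def by auto
    have "gsub (z t1) (z t2) = (int d, 0)"
      unfolding gsub_def t1(2) t2(2) using ab(3,4) by (simp add: algebra_simps)
    then show False using av t1(1) t2(1) by blast
  qed
  then show ?thesis unfolding A_def using assms(2) by simp
qed

end
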